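(* Let $a, b, n$ be positive integers with $b>1$, $n>1$ and $\gcd(r_b(n),a)=1$. Then \[\operatorname{Ap}(S_a(b,n)) = \left\{ \sum_{i=2}^n u_i a_i \;\middle|\; (u_2,\ldots,u_n) \in R(b,n)\right\}.\]
   Context: For an integer $\ell \ge 1$, $r_b(\ell) = \sum_{j=0}^{\ell-1} b^j$, and $r_b(0)=0$. For $i \ge 1$, $a_i := r_b(n) + a\, r_b(i-1)$; $S_a(b,n)$ is the numerical semigroup generated by $\{a_i : i\ge 1\}$ (its multiplicity is $a_1$). For a numerical semigroup $S$ and $s\in S$, $\operatorname{Ap}(S,s) = \{\omega \in S : \omega - s \notin S\}$, and $\operatorname{Ap}(S) := \operatorname{Ap}(S, \operatorname{m}(S))$ where $\operatorname{m}(S)$ is the smallest nonzero element of $S$. For $i\ge 2$, $R(b,i)$ is the set of $(u_2,\ldots,u_i) \in \mathbb{N}^{i-1}$ with $0 \le u_j \le b$ for all $j$, and such that $u_j = b$ implies $u_k = 0$ for all $2\le k<j$. *)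

theory Defs
  imports Main
begin

definition repunit :: "nat \<Rightarrow> nat \<Rightarrow> nat" where
  "repunit b l = (\<Sum>j<l. b ^ j)"

definition gen_a :: "nat \<Rightarrow> nat \<Rightarrow> nat \<Rightarrow> nat \<Rightarrow> nat" where
  "gen_a a b n i = repunit b n + a * repunit b (i - 1)"

inductive_set monoid_gen :: "nat set \<Rightarrow> nat set" for A :: "nat set" where
  zero: "0 \<in> monoid_gen A"
| add: "x \<in> A \<Longrightarrow> y \<in> monoid_gen A \<Longrightarrow> x + y \<in> monoid_gen A"

definition S_abn :: "nat \<Rightarrow> nat \<Rightarrow> nat \<Rightarrow> nat set" where
  "S_abn a b n = monoid_gen {gen_a a b n i | i. i \<ge> 1}"

definition multiplicity_ns :: "nat set \<Rightarrow> nat" where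
  "multiplicity_ns S = (LEAST x. x \<in> S \<and> x \<noteq> 0)"

definition Apery_set :: "nat set \<Rightarrow> nat \<Rightarrow> nat set" where
  "Apery_set S s = {w \<in> S. \<not> (w \<ge> s \<and> w - s \<in> S)}"

definition Apery :: "nat set \<Rightarrow> nat set" where
  "Apery S = Apery_set S (multiplicity_ns S)"

(* R(b,i): tuples (u_2,...,u_i), represented as functions nat => nat that vanish
   outside {2..i}, with 0 <= u_j <= b and u_j = b implying u_k = 0 for 2 <= k < j *)
definition R_set :: "nat \<Rightarrow> nat \<Rightarrow> (nat \<Rightarrow> nat) set" where
  "R_set b i = {u. (\<forall>j. j \<notin> {2..i} \<longrightarrow> u j = 0)
                 \<and> (\<forall>j\<in>{2..i}. u j \<le> b)
                 \<and> (\<forall>j\<in>{2..i}. u j = b \<longrightarrow> (\<forall>k\<in>{2..<j}. u k = 0))}"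

end

theory Submission imports Defs "HOL-Number_Theory.Cong" begin

lemma rep0[simp]: "repunit b 0 = 0" by (simp add: repunit_def)
lemma repSuc: "repunit b (Suc n) = b * repunit b n + 1"
proof (induction n)
  case 0 then show ?case by (simp add: repunit_def)
next
  case (Suc n)
  have "repunit b (Suc (Suc n)) = repunit b (Suc n) + b ^ Suc n" by (simp add: repunit_def)
  also have "\<dots> = b * repunit b n + 1 + b * b^n" using Suc by simp
  also have "\<dots> = b * (repunit b n + b^n) + 1" by (simp add: algebra_simps)
  also have "repunit b n + b^n = repunit b (Suc n)" by (simp add: repunit_def)
  finally show ?case .
qed
lemma repSuc2: "repunit b (Suc n) = repunit b n + b ^ n" by (simp add: repunit_def)
lemma rep_add: "repunit b (m + n) = repunit b m + b^m * repunit b n"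
  by (induction n) (simp_all add: repSuc2 algebra_simps power_add)
lemma rep_pos: "n \<ge> 1 \<Longrightarrow> repunit b n \<ge> 1"
  by (cases n) (simp_all add: repSuc)
lemma rep_mono: "b \<ge> 1 \<Longrightarrow> j < n \<Longrightarrow> repunit b j < repunit b n"
proof (induction n)
  case 0 then show ?case by simp
next
  case (Suc n)
  have "repunit b n < repunit b (Suc n)" using Suc.prems by (simp add: repSuc2)
  then show ?case using Suc by (cases "j = n") auto
qed

fun hh :: "nat \<Rightarrow> nat \<Rightarrow> nat \<Rightarrow> nat" where
  "hh b 0 x = 0"
| "hh b (Suc n) x = x div repunit b n + hh b n (x mod repunit b n)"

lemma hh_zero[simp]: "hh b n 0 = 0" by (induction n) auto

lemma hh_low: "x < repunit b n \<Longrightarrow> hh b (Suc n) x = hh b n x" by simp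

definition Nv :: "nat \<Rightarrow> nat \<Rightarrow> (nat \<Rightarrow> nat) \<Rightarrow> nat" where
  "Nv b n u = (\<Sum>i=2..n. u i * repunit b (i - 1))"
definition ds :: "nat \<Rightarrow> (nat \<Rightarrow> nat) \<Rightarrow> nat" where
  "ds n u = (\<Sum>i=2..n. u i)"

lemma ivl_Suc: "n \<ge> 1 \<Longrightarrow> {2..Suc n} = insert (Suc n) {2..n}" by auto

lemma Nv_Suc: "n \<ge> 1 \<Longrightarrow> Nv b (Suc n) u = Nv b n u + u (Suc n) * repunit b n"
  unfolding Nv_def by (simp add: ivl_Suc)
lemma ds_Suc: "n \<ge> 1 \<Longrightarrow> ds (Suc n) u = ds n u + u (Suc n)"
  unfolding ds_def by (simp add: ivl_Suc)
lemma Nv_upd: "Nv b n (u(Suc n := v)) = Nv b n u"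
  unfolding Nv_def by (rule sum.cong) auto
lemma ds_upd: "ds n (u(Suc n := v)) = ds n u"
  unfolding ds_def by (rule sum.cong) auto

lemma R_restrict: "u \<in> R_set b (Suc n) \<Longrightarrow> u(Suc n := 0) \<in> R_set b n"
  unfolding R_set_def mem_Collect_eq
proof (intro conjI ballI allI impI)
  assume A: "(\<forall>j. j \<notin> {2..Suc n} \<longrightarrow> u j = 0) \<and> (\<forall>j\<in>{2..Suc n}. u j \<le> b) \<and>
    (\<forall>j\<in>{2..Suc n}. u j = b \<longrightarrow> (\<forall>k\<in>{2..<j}. u k = 0))"
  fix j
  { assume "j \<notin> {2..n}" thus "(u(Suc n := 0)) j = 0" using A by (cases "j = Suc n") auto }
  { assume "j \<in> {2..n}" thus "(u(Suc n := 0)) j \<le> b" using A by auto }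
  { fix k assume j: "j \<in> {2..n}" and "(u(Suc n := 0)) j = b" and k: "k \<in> {2..<j}"
    hence ub: "u j = b" using j by (auto split: if_splits)
    have j2: "j \<in> {2..Suc n}" using j by simp
    have "\<forall>j\<in>{2..Suc n}. u j = b \<longrightarrow> (\<forall>k\<in>{2..<j}. u k = 0)" using A by (elim conjE)
    hence "u k = 0" using j2 ub k by blast
    thus "(u(Suc n := 0)) k = 0" by simp }
qed

lemma R_top: "u \<in> R_set b n \<Longrightarrow> j \<in> {2..n} \<Longrightarrow> u j \<le> b"
  unfolding R_set_def by blast
lemma R_out: "u \<in> R_set b n \<Longrightarrow> j \<notin> {2..n} \<Longrightarrow> u j = 0"
  unfolding R_set_def by blast
lemma R_b: "u \<in> R_set b n \<Longrightarrow> j \<in> {2..n} \<Longrightarrow> u j = b \<Longrightarrow> k \<in> {2..<j} \<Longrightarrow> u k = 0"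
  unfolding R_set_def by blast
lemma R_intro: "(\<And>j. j \<notin> {2..n} \<Longrightarrow> u j = 0) \<Longrightarrow> (\<And>j. j \<in> {2..n} \<Longrightarrow> u j \<le> b)
  \<Longrightarrow> (\<And>j k. j \<in> {2..n} \<Longrightarrow> u j = b \<Longrightarrow> k \<in> {2..<j} \<Longrightarrow> u k = 0) \<Longrightarrow> u \<in> R_set b n"
  unfolding R_set_def by blast

lemma Nv_zero: "b \<ge> 1 \<Longrightarrow> Nv b n u = 0 \<Longrightarrow> k \<in> {2..n} \<Longrightarrow> u k = 0"
proof -
  assume b: "b \<ge> 1" and N: "Nv b n u = 0" and k: "k \<in> {2..n}"
  have "u k * repunit b (k - 1) \<le> Nv b n u"
    unfolding Nv_def using k by (intro member_le_sum) auto
  moreover have "repunit b (k - 1) \<ge> 1" using k by (intro rep_pos) auto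
  ultimately show ?thesis using N by (metis le_zero_eq mult_is_0 not_one_le_zero)
qed

lemma Nv_bound: "b \<ge> 1 \<Longrightarrow> u \<in> R_set b n \<Longrightarrow> n \<ge> 1 \<Longrightarrow> Nv b n u < repunit b n"
proof (induction n arbitrary: u)
  case 0 then show ?case by simp
next
  case (Suc n)
  show ?case
  proof (cases "n = 0")
    case True then show ?thesis by (simp add: Nv_def repunit_def)
  next
    case False
    hence n1: "n \<ge> 1" by simp
    define u' where "u' = u(Suc n := 0)"
    have u'R: "u' \<in> R_set b n" using Suc.prems R_restrict u'_def by blast
    have IH: "Nv b n u' < repunit b n" using Suc.IH[OF Suc.prems(1) u'R n1] .
    have eq: "Nv b (Suc n) u = Nv b n u' + u (Suc n) * repunit b n"
      using Nv_Suc[OF n1] Nv_upd u'_def by metis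
    have d: "u (Suc n) \<le> b" using Suc.prems(2) n1 by (intro R_top) auto
    show ?thesis
    proof (cases "u (Suc n) = b")
      case True
      have "\<forall>k\<in>{2..<Suc n}. u k = 0" using R_b[OF Suc.prems(2), of "Suc n"] True n1 by simp
      hence "Nv b n u' = 0" unfolding Nv_def u'_def by (intro sum.neutral) auto
      then show ?thesis using eq True by (simp add: repSuc)
    next
      case False
      hence "u (Suc n) \<le> b - 1" using d by simp
      hence "u (Suc n) * repunit b n \<le> (b - 1) * repunit b n" by simp
      hence "Nv b (Suc n) u < (b - 1) * repunit b n + repunit b n" using eq IH by linarith
      also have "\<dots> = b * repunit b n" using Suc.prems(1)
        by (simp add: diff_mult_distrib)
      finally show ?thesis by (simp add: repSuc)
    qed
  qed
qed

lemma hh_Nv: "b \<ge> 1 \<Longrightarrow> u \<in> R_set b n \<Longrightarrow> hh b n (Nv b n u) = ds n u"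
proof (induction n arbitrary: u)
  case 0 then show ?case by (simp add: ds_def)
next
  case (Suc n)
  show ?case
  proof (cases "n = 0")
    case True then show ?thesis by (simp add: ds_def)
  next
    case False
    hence n1: "n \<ge> 1" by simp
    define u' where "u' = u(Suc n := 0)"
    have u'R: "u' \<in> R_set b n" using Suc.prems R_restrict u'_def by blast
    have B: "Nv b n u' < repunit b n" using Nv_bound[OF Suc.prems(1) u'R n1] .
    have IH: "hh b n (Nv b n u') = ds n u'" using Suc.IH[OF Suc.prems(1) u'R] .
    have eq: "Nv b (Suc n) u = u (Suc n) * repunit b n + Nv b n u'"
      using Nv_Suc[OF n1] Nv_upd u'_def by (metis add.commute)
    have dseq: "ds (Suc n) u = ds n u' + u (Suc n)"
      using ds_Suc[OF n1] ds_upd u'_def by metis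
    have "Nv b (Suc n) u div repunit b n = u (Suc n)" using eq B by simp
    moreover have "Nv b (Suc n) u mod repunit b n = Nv b n u'" using eq B by simp
    ultimately show ?thesis using IH dseq by simp
  qed
qed

lemma exists_R: "b \<ge> 1 \<Longrightarrow> x < repunit b n \<Longrightarrow> \<exists>u\<in>R_set b n. Nv b n u = x \<and> ds n u = hh b n x"
proof (induction n arbitrary: x)
  case 0 then show ?case by simp
next
  case (Suc n)
  show ?case
  proof (cases "n = 0")
    case True
    have "(\<lambda>_. 0) \<in> R_set b (Suc n)" by (rule R_intro) auto
    then show ?thesis using True Suc.prems by (auto simp: Nv_def ds_def repunit_def)
  next
    case False
    hence n1: "n \<ge> 1" by simp
    let ?r = "repunit b n"
    have rpos: "?r \<ge> 1" using rep_pos n1 by blast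
    obtain u' where u'R: "u' \<in> R_set b n" and N': "Nv b n u' = x mod ?r" and D': "ds n u' = hh b n (x mod ?r)"
      using Suc.IH[OF Suc.prems(1), of "x mod ?r"] rpos by auto
    define u where "u = u'(Suc n := x div ?r)"
    have xlt: "x < b * ?r + 1" using Suc.prems(2) by (simp add: repSuc)
    have dle: "x div ?r \<le> b"
    proof -
      have "x div ?r \<le> (b * ?r) div ?r" using xlt by (intro div_le_mono) simp
      thus ?thesis using rpos by simp
    qed
    have db: "x div ?r = b \<Longrightarrow> x mod ?r = 0"
    proof -
      assume "x div ?r = b"
      hence "x = b * ?r + x mod ?r" by (metis div_mult_mod_eq mult.commute)
      thus ?thesis using xlt by linarith
    qed
    have u'0: "\<forall>j. j \<notin> {2..n} \<longrightarrow> u' j = 0" using u'R R_out by blast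
    have uR: "u \<in> R_set b (Suc n)"
    proof (rule R_intro)
      fix j assume "j \<notin> {2..Suc n}" thus "u j = 0" using u'0 u_def n1 by auto
    next
      fix j assume j: "j \<in> {2..Suc n}"
      show "u j \<le> b"
      proof (cases "j = Suc n")
        case True thus ?thesis using dle u_def by simp
      next
        case False thus ?thesis using j u'R R_top u_def by auto
      qed
    next
      fix j k assume j: "j \<in> {2..Suc n}" and ub: "u j = b" and k: "k \<in> {2..<j}"
      show "u k = 0"
      proof (cases "j = Suc n")
        case True
        hence "x mod ?r = 0" using db ub u_def by simp
        hence "u' k = 0" using Nv_zero[OF Suc.prems(1)] N' k True by auto
        thus ?thesis using k True u_def by auto
      next
        case False
        hence jj: "u' j = b" "j \<in> {2..n}" using ub u_def j by auto
        hence "u' k = 0" using R_b[OF u'R] k by blast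
        thus ?thesis using k u_def jj by auto
      qed
    qed
    have "Nv b (Suc n) u = x"
      using Nv_Suc[OF n1, of b u] Nv_upd[of b n u' "x div ?r"] N' u_def
      by (simp add: mult.commute)
    moreover have "ds (Suc n) u = hh b (Suc n) x"
      using ds_Suc[OF n1, of u] ds_upd[of n u' "x div ?r"] D' u_def by simp
    ultimately show ?thesis using uR by blast
  qed
qed


lemma hh_decomp: "y < repunit b n \<Longrightarrow> hh b (Suc n) (d * repunit b n + y) = d + hh b n y"
  by simp

lemma hh_top: "hh b n (repunit b n - 1) \<le> b"
proof (cases n)
  case 0 then show ?thesis by simp
next
  case (Suc m)
  have e: "repunit b n - 1 = b * repunit b m" using Suc by (simp add: repSuc)
  show ?thesis
  proof (cases "repunit b m = 0")
    case True then show ?thesis using e Suc by simp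
  next
    case False then show ?thesis using e Suc by simp
  qed
qed

lemma hh_rep_minus: "1 \<le> j \<Longrightarrow> j \<le> n \<Longrightarrow> b \<ge> 1 \<Longrightarrow> hh b n (repunit b j - 1) \<le> b"
proof (induction n)
  case 0 then show ?case by simp
next
  case (Suc n)
  show ?case
  proof (cases "j = Suc n")
    case True then show ?thesis using hh_top[of b "Suc n"] by (simp del: hh.simps)
  next
    case False
    hence jn: "j \<le> n" using Suc.prems by simp
    have "repunit b j \<le> repunit b n" using rep_mono[OF Suc.prems(3), of j n] jn
      by (cases "j = n") auto
    moreover have "repunit b j \<ge> 1" using rep_pos Suc.prems by blast
    ultimately have "repunit b j - 1 < repunit b n" by linarith
    hence "hh b (Suc n) (repunit b j - 1) = hh b n (repunit b j - 1)" by (rule hh_low)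
    then show ?thesis using Suc.IH[OF Suc.prems(1) jn Suc.prems(3)] by simp
  qed
qed

lemma hh_dec: "b \<ge> 1 \<Longrightarrow> 0 < z \<Longrightarrow> z < repunit b n \<Longrightarrow> hh b n (z - 1) \<le> hh b n z + (b - 1)"
proof (induction n arbitrary: z)
  case 0 then show ?case by simp
next
  case (Suc n)
  let ?r = "repunit b n"
  show ?case
  proof (cases "n = 0")
    case True then show ?thesis using Suc.prems by (simp add: repunit_def)
  next
    case False
    hence rpos: "?r \<ge> 1" using rep_pos by simp
    define d where "d = z div ?r"
    define y where "y = z mod ?r"
    have z: "z = d * ?r + y" unfolding d_def y_def by (metis div_mult_mod_eq)
    have yr: "y < ?r" unfolding y_def using rpos by simp
    have hz: "hh b (Suc n) z = d + hh b n y" using z yr hh_decomp by metis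
    show ?thesis
    proof (cases "y > 0")
      case True
      have "z - 1 = d * ?r + (y - 1)" using z True by simp
      moreover have "y - 1 < ?r" using yr by simp
      ultimately have "hh b (Suc n) (z - 1) = d + hh b n (y - 1)" using hh_decomp by metis
      also have "\<dots> \<le> d + (hh b n y + (b - 1))" using Suc.IH[OF Suc.prems(1) True yr] by simp
      finally show ?thesis using hz by simp
    next
      case False
      hence y0: "y = 0" by simp
      hence dpos: "d > 0" using z Suc.prems(2) by (cases d) auto
      have "z - 1 = (d - 1) * ?r + (?r - 1)" using z y0 dpos rpos
        by (cases d) (auto simp: algebra_simps)
      moreover have "?r - 1 < ?r" using rpos by simp
      ultimately have "hh b (Suc n) (z - 1) = (d - 1) + hh b n (?r - 1)" using hh_decomp by metis
      also have "\<dots> \<le> (d - 1) + b" using hh_top by simp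
      finally show ?thesis using hz y0 dpos by simp
    qed
  qed
qed

lemma lt_mult_iff: "(y::nat) < r \<Longrightarrow> (d*r + y < e*r) = (d < e)"
proof
  assume y: "y < r" and h: "d*r + y < e*r"
  show "d < e"
  proof (rule ccontr)
    assume "\<not> d < e" hence "e * r \<le> d * r" by simp
    thus False using h by linarith
  qed
next
  assume y: "y < r" and h: "d < e"
  hence "Suc d * r \<le> e * r" by (intro mult_le_mono1) simp
  thus "d*r + y < e*r" using y by simp
qed

lemma hh_add:
  assumes "b \<ge> 1" "x < repunit b n" "1 \<le> j" "j < n"
  shows "(x + repunit b j < repunit b n \<longrightarrow> hh b n (x + repunit b j) \<le> hh b n x + 1) \<and>
         (repunit b n \<le> x + repunit b j \<longrightarrow> hh b n (x + repunit b j - repunit b n) \<le> hh b n x)"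
  using assms
proof (induction n arbitrary: x j)
  case 0 then show ?case by simp
next
  case (Suc n)
  have b1: "b \<ge> 1" and j1: "1 \<le> j" using Suc.prems by auto
  have n1: "n \<ge> 1" using Suc.prems by simp
  let ?r = "repunit b n"
  let ?c = "repunit b j"
  have rpos: "?r \<ge> 1" using rep_pos n1 by simp
  have R': "repunit b (Suc n) = b * ?r + 1" by (simp add: repSuc)
  define d where "d = x div ?r"
  define y where "y = x mod ?r"
  have x: "x = d * ?r + y" unfolding d_def y_def by (metis div_mult_mod_eq)
  have yr: "y < ?r" unfolding y_def using rpos by simp
  have hx: "hh b (Suc n) x = d + hh b n y" using x yr hh_decomp by metis
  have xlt: "d * ?r + y < b * ?r + 1" using x Suc.prems(2) R' by simp
  have dle: "d \<le> b"
  proof (rule ccontr)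
    assume "\<not> d \<le> b" hence "Suc b * ?r \<le> d * ?r" by (intro mult_le_mono1) simp
    thus False using xlt rpos by simp
  qed
  have db: "d = b \<Longrightarrow> y = 0" using xlt by simp
  have cpos: "?c \<ge> 1" using rep_pos j1 by simp
  show ?case
  proof (cases "j = n")
    case True
    hence c: "?c = ?r" by simp
    show ?thesis
    proof (intro conjI impI)
      assume "x + ?c < repunit b (Suc n)"
      have "x + ?c = Suc d * ?r + y" using x c by simp
      hence "hh b (Suc n) (x + ?c) = Suc d + hh b n y" using yr hh_decomp by metis
      thus "hh b (Suc n) (x + ?c) \<le> hh b (Suc n) x + 1" using hx by simp
    next
      assume ge: "repunit b (Suc n) \<le> x + ?c"
      show "hh b (Suc n) (x + ?c - repunit b (Suc n)) \<le> hh b (Suc n) x"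
      proof (cases "d = b")
        case True
        hence y0: "y = 0" using db by simp
        have "x + ?c - repunit b (Suc n) = ?r - 1" using x c R' True y0 by simp
        moreover have "?r - 1 < ?r" using rpos by simp
        ultimately have "hh b (Suc n) (x + ?c - repunit b (Suc n)) = hh b n (?r - 1)"
          using hh_low by metis
        also have "\<dots> \<le> b" by (rule hh_top)
        finally show ?thesis using hx True y0 by simp
      next
        case False
        have "d + 1 = b"
        proof (rule ccontr)
          assume "d + 1 \<noteq> b" hence "Suc d < b" using False dle by simp
          hence "Suc d * ?r + y < b * ?r" using lt_mult_iff[OF yr] by blast
          thus False using ge x c R' by simp
        qed
        hence y1: "y \<ge> 1" using ge x c R' by (cases y) auto
        have "x + ?c - repunit b (Suc n) = y - 1" using x c R' \<open>d + 1 = b\<close>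
          by (auto simp: algebra_simps)
        moreover have "y - 1 < ?r" using yr by simp
        ultimately have "hh b (Suc n) (x + ?c - repunit b (Suc n)) = hh b n (y - 1)"
          using hh_low by metis
        also have "\<dots> \<le> hh b n y + (b - 1)" using hh_dec[OF b1 _ yr] y1 by simp
        finally show ?thesis using hx \<open>d + 1 = b\<close> by simp
      qed
    qed
  next
    case False
    hence jn: "j < n" using Suc.prems by simp
    have cr: "?c < ?r" using rep_mono[OF b1 jn] .
    note IH = Suc.IH[OF b1 yr j1 jn]
    show ?thesis
    proof (cases "y + ?c < ?r")
      case small: True
      show ?thesis
      proof (cases "d = b")
        case True
        hence y0: "y = 0" using db by simp
        have val: "x + ?c - repunit b (Suc n) = ?c - 1" using x R' True y0 cpos by simp
        have big: "repunit b (Suc n) \<le> x + ?c" using x R' True y0 cpos by simp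
        show ?thesis
        proof (intro conjI impI)
          assume "x + ?c < repunit b (Suc n)" thus "hh b (Suc n) (x + ?c) \<le> hh b (Suc n) x + 1"
            using big by simp
        next
          have "hh b (Suc n) (?c - 1) \<le> b" using hh_rep_minus[OF j1 _ b1, of "Suc n"] jn by simp
          thus "hh b (Suc n) (x + ?c - repunit b (Suc n)) \<le> hh b (Suc n) x"
            using val hx True y0 by simp
        qed
      next
        case False
        hence dlt: "d < b" using dle by simp
        have e: "x + ?c = d * ?r + (y + ?c)" using x by simp
        have "d * ?r + (y + ?c) < b * ?r" using lt_mult_iff[OF small] dlt by blast
        hence small2: "x + ?c < repunit b (Suc n)" using e R' by simp
        have "hh b (Suc n) (x + ?c) = d + hh b n (y + ?c)" using e small hh_decomp by metis
        also have "\<dots> \<le> d + (hh b n y + 1)" using IH small by simp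
        finally show ?thesis using hx small2 by simp
      qed
    next
      case large: False
      define z where "z = y + ?c - ?r"
      have zr: "z < ?r" unfolding z_def using yr cr by simp
      have hz: "hh b n z \<le> hh b n y" using IH large z_def by simp
      have dlt: "d < b" using db dle large cr by (cases "d = b") auto
      have e: "x + ?c = Suc d * ?r + z" using x large z_def by simp
      show ?thesis
      proof (intro conjI impI)
        assume "x + ?c < repunit b (Suc n)"
        have "hh b (Suc n) (x + ?c) = Suc d + hh b n z" using e zr hh_decomp by metis
        thus "hh b (Suc n) (x + ?c) \<le> hh b (Suc n) x + 1" using hx hz by simp
      next
        assume ge: "repunit b (Suc n) \<le> x + ?c"
        have "d + 1 = b"
        proof (rule ccontr)
          assume "d + 1 \<noteq> b" hence "Suc d < b" using dlt by simp
          hence "Suc d * ?r + z < b * ?r" using lt_mult_iff[OF zr] by blast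
          thus False using ge e R' by simp
        qed
        hence z1: "z \<ge> 1" using ge e R' by (cases z) auto
        have "x + ?c - repunit b (Suc n) = z - 1" using e R' \<open>d + 1 = b\<close>
          by (auto simp: algebra_simps)
        moreover have "z - 1 < ?r" using zr by simp
        ultimately have "hh b (Suc n) (x + ?c - repunit b (Suc n)) = hh b n (z - 1)"
          using hh_low by metis
        also have "\<dots> \<le> hh b n z + (b - 1)" using hh_dec[OF b1 _ zr] z1 by simp
        finally show "hh b (Suc n) (x + ?c - repunit b (Suc n)) \<le> hh b (Suc n) x"
          using hx hz \<open>d + 1 = b\<close> by simp
      qed
    qed
  qed
qed


lemma dm_mod: "y < (r::nat) \<Longrightarrow> (q*r + y) mod r = y" by simp
lemma dm_div: "y < (r::nat) \<Longrightarrow> (q*r + y) div r = q" by simp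

lemma step:
  assumes b1: "b \<ge> 1" and n1: "n \<ge> 1"
  shows "hh b n ((M + repunit b k) mod repunit b n) + M div repunit b n
         \<le> hh b n (M mod repunit b n) + 1 + (M + repunit b k) div repunit b n"
proof (induction k arbitrary: M rule: less_induct)
  case (less k)
  let ?r = "repunit b n"
  have rpos: "?r \<ge> 1" using rep_pos n1 by simp
  define x where "x = M mod ?r"
  define q where "q = M div ?r"
  have M: "M = q * ?r + x" unfolding x_def q_def by (metis div_mult_mod_eq)
  have xr: "x < ?r" unfolding x_def using rpos by simp
  consider "k = 0" | "1 \<le> k \<and> k < n" | "k = n" | "k > n" by linarith
  then show ?case
  proof cases
    case 1 then show ?thesis by simp
  next
    case 2
    let ?c = "repunit b k"
    have H: "(x + ?c < ?r \<longrightarrow> hh b n (x + ?c) \<le> hh b n x + 1) \<and>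
         (?r \<le> x + ?c \<longrightarrow> hh b n (x + ?c - ?r) \<le> hh b n x)"
      using hh_add[OF b1 xr] 2 by blast
    show ?thesis
    proof (cases "x + ?c < ?r")
      case True
      have e: "M + ?c = q * ?r + (x + ?c)" using M by simp
      have "(M + ?c) mod ?r = x + ?c" by (simp only: e dm_mod[OF True])
      moreover have "(M + ?c) div ?r = q" by (simp only: e dm_div[OF True])
      ultimately show ?thesis using H True x_def q_def by simp
    next
      case False
      have cr: "?c < ?r" using rep_mono[OF b1] 2 by blast
      have e: "M + ?c = Suc q * ?r + (x + ?c - ?r)" using M False by simp
      have lt: "x + ?c - ?r < ?r" using xr cr by simp
      have "(M + ?c) mod ?r = x + ?c - ?r" by (simp only: e dm_mod[OF lt])
      moreover have "(M + ?c) div ?r = Suc q" by (simp only: e dm_div[OF lt])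
      ultimately show ?thesis using H False x_def q_def by simp
    qed
  next
    case 3
    have e: "M + repunit b k = Suc q * ?r + x" using M 3 by simp
    have "(M + repunit b k) mod ?r = x" by (simp only: e dm_mod[OF xr])
    moreover have "(M + repunit b k) div ?r = Suc q" by (simp only: e dm_div[OF xr])
    ultimately show ?thesis using x_def q_def by simp
  next
    case 4
    define e where "e = k - n"
    have k: "k = e + n" "e < k" "e \<ge> 1" using 4 n1 e_def by auto
    have rk: "repunit b k = repunit b e + b^e * ?r" using rep_add k(1) by simp
    define M1 where "M1 = M + repunit b e"
    have IH: "hh b n (M1 mod ?r) + M div ?r \<le> hh b n (M mod ?r) + 1 + M1 div ?r"
      using less.IH[OF k(2)] M1_def by simp
    have "M + repunit b k = M1 + b^e * ?r" using rk M1_def by simp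
    hence "(M + repunit b k) mod ?r = M1 mod ?r" "(M + repunit b k) div ?r = M1 div ?r + b^e"
      using rpos by simp_all
    then show ?thesis using IH by simp
  qed
qed

lemma mg_add: "x \<in> monoid_gen A \<Longrightarrow> y \<in> monoid_gen A \<Longrightarrow> x + y \<in> monoid_gen A"
  by (induction x rule: monoid_gen.induct) (auto simp: add.assoc intro: monoid_gen.add)
lemma mg_gen: "g \<in> A \<Longrightarrow> g \<in> monoid_gen A"
  using monoid_gen.add[OF _ monoid_gen.zero] by fastforce
lemma mg_mult: "x \<in> monoid_gen A \<Longrightarrow> k * x \<in> monoid_gen A"
  by (induction k) (auto intro: mg_add monoid_gen.zero)
lemma mg_sum: "finite I \<Longrightarrow> (\<And>i. i \<in> I \<Longrightarrow> f i \<in> monoid_gen A) \<Longrightarrow> (\<Sum>i\<in>I. f i) \<in> monoid_gen A"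
  by (induction I rule: finite_induct) (auto intro: mg_add monoid_gen.zero)
lemma mg_ge: "x \<in> monoid_gen A \<Longrightarrow> (\<And>g. g \<in> A \<Longrightarrow> g \<ge> r) \<Longrightarrow> x = 0 \<or> x \<ge> r"
  by (induction x rule: monoid_gen.induct) force+

lemma gen_a_eq: "gen_a a b n i = repunit b n + a * repunit b (i - 1)"
  by (simp add: gen_a_def)

lemma S_inv:
  assumes b1: "b \<ge> 1" and n1: "n \<ge> 1" and s: "s \<in> S_abn a b n"
  shows "\<exists>C M. s = repunit b n * C + a * M \<and> hh b n (M mod repunit b n) \<le> C + M div repunit b n"
  using s unfolding S_abn_def
proof (induction s rule: monoid_gen.induct)
  case zero
  show ?case by (rule exI[of _ 0], rule exI[of _ 0]) simp
next
  case (add x y)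
  then obtain C M where y: "y = repunit b n * C + a * M"
    and h: "hh b n (M mod repunit b n) \<le> C + M div repunit b n" by blast
  obtain i where i: "x = gen_a a b n i" using add.hyps(1) by blast
  define M' where "M' = M + repunit b (i - 1)"
  have "x + y = repunit b n * (C + 1) + a * M'" using i y M'_def
    by (simp add: gen_a_eq algebra_simps)
  moreover have "hh b n (M' mod repunit b n) \<le> (C + 1) + M' div repunit b n"
    using step[OF b1 n1, of M "i - 1"] h unfolding M'_def[symmetric] by linarith
  ultimately show ?case by blast
qed

lemma T_eq: "(\<Sum>i=2..n. u i * gen_a a b n i) = repunit b n * ds n u + a * Nv b n u"
  unfolding gen_a_eq ds_def Nv_def
  by (simp add: algebra_simps sum.distrib sum_distrib_left)

lemma T_in: "(\<Sum>i=2..n. u i * gen_a a b n i) \<in> S_abn a b n"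
  unfolding S_abn_def
  by (intro mg_sum mg_mult mg_gen) auto


lemma mult_eq:
  assumes b1: "b \<ge> 1" and n1: "n \<ge> 1"
  shows "multiplicity_ns (S_abn a b n) = repunit b n"
  unfolding multiplicity_ns_def
proof (rule Least_equality)
  have "gen_a a b n 1 = repunit b n" by (simp add: gen_a_eq)
  hence "repunit b n \<in> S_abn a b n" unfolding S_abn_def by (intro mg_gen) force
  thus "repunit b n \<in> S_abn a b n \<and> repunit b n \<noteq> 0" using rep_pos[OF n1, of b] by simp
next
  fix y assume y: "y \<in> S_abn a b n \<and> y \<noteq> 0"
  have "y = 0 \<or> y \<ge> repunit b n" using y unfolding S_abn_def
    by (rule mg_ge[OF conjunct1]) (auto simp: gen_a_eq)
  thus "repunit b n \<le> y" using y by simp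
qed

theorem theorem15:
  fixes a b n :: nat
  assumes "a > 0" and "b > 1" and "n > 1"
    and "gcd (repunit b n) a = 1"
  shows "Apery (S_abn a b n) = {(\<Sum>i=2..n. u i * gen_a a b n i) | u. u \<in> R_set b n}"
proof -
  have b1: "b \<ge> 1" and n1: "n \<ge> 1" and a1: "a \<ge> 1" using assms by auto
  define r where "r = repunit b n"
  have rpos: "r \<ge> 1" using rep_pos[OF n1, of b] r_def by simp
  have cop: "coprime a r" using assms(4) r_def by (simp add: coprime_iff_gcd_eq_1 gcd.commute)
  have rS: "r \<in> S_abn a b n"
  proof -
    have "gen_a a b n 1 = r" by (simp add: gen_a_eq r_def)
    thus ?thesis unfolding S_abn_def by (intro mg_gen) force
  qed
  have addS: "x \<in> S_abn a b n \<Longrightarrow> y \<in> S_abn a b n \<Longrightarrow> x + y \<in> S_abn a b n" for x y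
    unfolding S_abn_def by (rule mg_add)
  have multS: "x \<in> S_abn a b n \<Longrightarrow> k * x \<in> S_abn a b n" for x k
    unfolding S_abn_def by (rule mg_mult)
  show ?thesis
    unfolding Apery_def Apery_set_def mult_eq[OF b1 n1] r_def[symmetric]
  proof (intro equalityI subsetI)
    fix w assume "w \<in> {w \<in> S_abn a b n. \<not> (r \<le> w \<and> w - r \<in> S_abn a b n)}"
    hence wS: "w \<in> S_abn a b n" and nw: "\<not> (r \<le> w \<and> w - r \<in> S_abn a b n)" by auto
    obtain C M where w: "w = r * C + a * M" and h: "hh b n (M mod r) \<le> C + M div r"
      using S_inv[OF b1 n1 wS] r_def by blast
    define x where "x = M mod r"
    define q where "q = M div r"
    have M: "M = q * r + x" unfolding x_def q_def by (metis div_mult_mod_eq)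
    have xr: "x < r" unfolding x_def using rpos by simp
    obtain u where uR: "u \<in> R_set b n" and N: "Nv b n u = x" and D: "ds n u = hh b n x"
      using exists_R[OF b1, of x n] xr r_def by blast
    define t where "t = (\<Sum>i=2..n. u i * gen_a a b n i)"
    have tS: "t \<in> S_abn a b n" unfolding t_def by (rule T_in)
    have t: "t = r * hh b n x + a * x" unfolding t_def T_eq N D r_def ..
    have qa: "q \<le> a * q" using a1 by simp
    have hle: "hh b n x \<le> C + a * q" using h qa unfolding x_def[symmetric] q_def[symmetric] by linarith
    define e where "e = C + a * q - hh b n x"
    have ee: "e + hh b n x = C + a*q" using hle e_def by simp
    have ee2: "r * e + r * hh b n x = r * C + a * q * r"
      using arg_cong[OF ee, of "\<lambda>z. r * z"] by (simp add: algebra_simps)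
    have wt: "w = t + r * e" using w t M ee2 by (simp add: algebra_simps)
    have "e = 0"
    proof (rule ccontr)
      assume "e \<noteq> 0"
      then obtain e' where "e = Suc e'" by (cases e) auto
      hence w2: "w = (t + (e - 1) * r) + r" using wt by (simp add: algebra_simps)
      hence "w - r = t + (e - 1) * r" "r \<le> w" by simp_all
      moreover have "t + (e - 1) * r \<in> S_abn a b n" using tS rS by (intro addS multS)
      ultimately show False using nw by simp
    qed
    hence "w = t" using wt by simp
    thus "w \<in> {(\<Sum>i=2..n. u i * gen_a a b n i) | u. u \<in> R_set b n}" using uR t_def by blast
  next
    fix w assume "w \<in> {(\<Sum>i=2..n. u i * gen_a a b n i) | u. u \<in> R_set b n}"
    then obtain u where uR: "u \<in> R_set b n" and wdef: "w = (\<Sum>i=2..n. u i * gen_a a b n i)" by blast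
    have wS: "w \<in> S_abn a b n" unfolding wdef by (rule T_in)
    have w: "w = r * ds n u + a * Nv b n u" unfolding wdef T_eq r_def ..
    have Nr: "Nv b n u < r" using Nv_bound[OF b1 uR n1] r_def by simp
    have hN: "hh b n (Nv b n u) = ds n u" using hh_Nv[OF b1 uR] .
    have "\<not> (r \<le> w \<and> w - r \<in> S_abn a b n)"
    proof
      assume A: "r \<le> w \<and> w - r \<in> S_abn a b n"
      obtain C M where w1: "w - r = r * C + a * M" and h: "hh b n (M mod r) \<le> C + M div r"
        using S_inv[OF b1 n1 conjunct2[OF A]] r_def by blast
      have E0: "w = r * C + a * M + r" using w1 A by linarith
      have E: "r * ds n u + a * Nv b n u = r * (C + 1) + a * M" using w E0 by (simp add: algebra_simps)
      have "(a * Nv b n u) mod r = (a * M) mod r"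
      proof -
        have "(a * Nv b n u + r * ds n u) mod r = (a * M + r * (C + 1)) mod r" using E by (metis add.commute)
        thus ?thesis by (simp only: mod_mult_self2)
      qed
      hence "[a * Nv b n u = a * M] (mod r)" by (simp add: cong_def)
      hence "[Nv b n u = M] (mod r)" using cong_mult_lcancel_nat[OF cop] by blast
      hence "Nv b n u = M mod r" using Nr by (simp add: cong_def)
      define q where "q = M div r"
      have M: "M = q * r + Nv b n u" unfolding q_def \<open>Nv b n u = M mod r\<close> by (metis div_mult_mod_eq)
      have "r * ds n u = r * (C + 1) + a * q * r" using E M by (simp add: algebra_simps)
      hence "r * ds n u = r * (C + 1 + a * q)" by (simp add: algebra_simps)
      moreover have r0: "r \<noteq> 0" using rpos by simp
      ultimately have "ds n u = C + 1 + a * q" by (simp only: mult_left_cancel[OF r0])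
      moreover have "ds n u \<le> C + q" using h hN \<open>Nv b n u = M mod r\<close> q_def by simp
      moreover have "q \<le> a * q" using a1 by simp
      ultimately show False by linarith
    qed
    thus "w \<in> {w \<in> S_abn a b n. \<not> (r \<le> w \<and> w - r \<in> S_abn a b n)}" using wS by simp
  qed
qed

end
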